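(* Let a sign pattern be given by a signed digraph on nodes $\{1,\dots,n\}$ with sign pattern matrix $\mathcal{A}$ (entries in $\{+,-,0\}$, entry $(j,l)$ nonzero meaning a directed edge $l\to j$ of the indicated sign) and input $B=b_1e_1$, $b_1>0$, such that node $1$ (the leader) has no incoming edges from the other nodes and every node is reachable from node $1$ by a directed walk. Consider temporally switching systems $\dot{x}(t)=A_ix(t)+Bu(t)$, $t\in[t_{i-1},t_i)$, in which every snapshot matrix $A_i$ has exactly the sign pattern $\mathcal{A}$ (same topology and same signs, only the magnitudes of the edge weights may differ between snapshots). Then there exist two realizations $A_1,A_2$ with sign pattern $\mathcal{A}$ and times $t_0<t_1<t_2$ such that the two-snapshot temporally switching system is completely herdable on $[t_0,t_2]$; that is, the temporal network with fixed topology is $\mathcal{SS}$ herdable within two snapshots (even when the static digraph is not $\mathcal{SS}$ herdable, e.g. because of signed or layer dilations).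
   Context: Completely herdable on $[t_0,t_f]$: for every initial condition $x(t_0)\in\mathbb{R}^n$ and every $h>0$ there is a piecewise continuous input $u$ on $[t_0,t_f]$ such that $x_j(t_f)\ge h$ for all $j=1,\dots,n$. A temporally switching digraph with a fixed sign pattern in all snapshots is $\mathcal{SS}$ herdable if there is a realization $(A_i,B)$ of the snapshots consistent with the sign pattern for which the temporal network is completely herdable. A signed dilation is a node whose outgoing edges have different signs; a layer dilation occurs in layer $L_k$ of the signed layered graph (layer $L_{k+1}$ = nodes reachable from the leader by a walk of length $k$) if the edges from nodes of $L_k$ to nodes of $L_{k+1}$ have mixed signs. *)

theory Defs
  imports "HOL-Analysis.Analysis"
begin

text \<open>Signs of a sign pattern matrix.\<close>
datatype sign = Plus | Minus | Zero

text \<open>Entry (j,k) of the sign pattern (and of a realization) concerns the edge k -> j.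
  A real matrix is a realization of the sign pattern S if it has exactly that sign pattern.\<close>
definition has_sign_pattern :: "('n::finite \<Rightarrow> 'n \<Rightarrow> sign) \<Rightarrow> real^'n^'n \<Rightarrow> bool" where
  "has_sign_pattern S A \<longleftrightarrow>
     (\<forall>j k. (S j k = Plus \<longrightarrow> A $ j $ k > 0) \<and>
            (S j k = Minus \<longrightarrow> A $ j $ k < 0) \<and>
            (S j k = Zero \<longrightarrow> A $ j $ k = 0))"

text \<open>Directed edge k -> j of the signed digraph.\<close>
definition edge :: "('n \<Rightarrow> 'n \<Rightarrow> sign) \<Rightarrow> 'n \<Rightarrow> 'n \<Rightarrow> bool" where
  "edge S k j \<longleftrightarrow> S j k \<noteq> Zero"

text \<open>Piecewise continuous scalar input on [a,b]: continuous except at finitely many points,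
  where one-sided limits (within the interval) exist.\<close>
definition piecewise_continuous_on :: "real \<Rightarrow> real \<Rightarrow> (real \<Rightarrow> real) \<Rightarrow> bool" where
  "piecewise_continuous_on a b u \<longleftrightarrow>
     (\<exists>D. finite D \<and> continuous_on ({a..b} - D) u \<and>
        (\<forall>s\<in>D. (\<exists>L. (u \<longlongrightarrow> L) (at s within {a..<s})) \<and>
                (\<exists>R. (u \<longlongrightarrow> R) (at s within {s<..b}))))"

text \<open>x solves  x'(t) = A(t) x(t) + B u(t)  on [t0,tf] (continuous, ODE holds off a finite set).\<close>
definition solves_lti :: "(real \<Rightarrow> real^'n^'n) \<Rightarrow> real^'n \<Rightarrow> real \<Rightarrow> real \<Rightarrow>
    (real \<Rightarrow> real) \<Rightarrow> (real \<Rightarrow> real^'n) \<Rightarrow> bool" where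
  "solves_lti A B t0 tf u x \<longleftrightarrow>
     continuous_on {t0..tf} x \<and>
     (\<exists>F. finite F \<and> (\<forall>t\<in>{t0<..<tf} - F.
        (x has_vector_derivative (A t *v x t + u t *\<^sub>R B)) (at t)))"

definition completely_herdable :: "(real \<Rightarrow> real^'n::finite^'n) \<Rightarrow> real^'n \<Rightarrow> real \<Rightarrow> real \<Rightarrow> bool" where
  "completely_herdable A B t0 tf \<longleftrightarrow>
     (\<forall>x0 h. h > 0 \<longrightarrow>
        (\<exists>u x. piecewise_continuous_on t0 tf u \<and> solves_lti A B t0 tf u x \<and> x t0 = x0 \<and>
               (\<forall>j. x tf $ j \<ge> h)))"

text \<open>Two-snapshot temporal system: A1 on [t0,t1), A2 on [t1,t2].\<close>
definition two_snapshots :: "real^'n^'n \<Rightarrow> real^'n^'n \<Rightarrow> real \<Rightarrow> real \<Rightarrow> real^'n^'n" where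
  "two_snapshots A1 A2 t1 t = (if t < t1 then A1 else A2)"

end

theory Submission
  imports Defs
begin
typedef (overloaded) ('a::real_normed_vector) endo = "UNIV :: ('a \<Rightarrow>\<^sub>L 'a) set"
  morphisms Rep_endo Abs_endo by simp

setup_lifting type_definition_endo

instantiation endo :: (real_normed_vector) real_normed_vector
begin
lift_definition norm_endo :: "'a endo \<Rightarrow> real" is norm .
lift_definition minus_endo :: "'a endo \<Rightarrow> 'a endo \<Rightarrow> 'a endo" is "(-)" .
lift_definition plus_endo :: "'a endo \<Rightarrow> 'a endo \<Rightarrow> 'a endo" is "(+)" .
lift_definition uminus_endo :: "'a endo \<Rightarrow> 'a endo" is "uminus" .
lift_definition zero_endo :: "'a endo" is "0" .
lift_definition scaleR_endo :: "real \<Rightarrow> 'a endo \<Rightarrow> 'a endo" is "scaleR" .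
definition dist_endo :: "'a endo \<Rightarrow> 'a endo \<Rightarrow> real" where "dist_endo a b = norm (a - b)"
definition sgn_endo :: "'a endo \<Rightarrow> 'a endo" where "sgn_endo x = scaleR (inverse (norm x)) x"
definition uniformity_endo :: "('a endo \<times> 'a endo) filter" where
  "uniformity_endo = (INF e\<in>{0 <..}. principal {(x, y). dist x y < e})"
definition open_endo :: "'a endo set \<Rightarrow> bool" where
  "open_endo S = (\<forall>x\<in>S. \<forall>\<^sub>F (x', y) in uniformity. x' = x \<longrightarrow> y \<in> S)"
instance
  apply standard
  unfolding dist_endo_def open_endo_def sgn_endo_def uniformity_endo_def
  apply (rule refl | (transfer, force simp: norm_triangle_ineq algebra_simps))+
  done
end

instantiation endo :: (real_normed_vector) "{times,one}"
begin
lift_definition times_endo :: "'a endo \<Rightarrow> 'a endo \<Rightarrow> 'a endo" is "blinfun_compose" .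
lift_definition one_endo :: "'a endo" is "id_blinfun" .
instance ..
end

lemma id_blinfun_ne_zero: "(id_blinfun :: 'a::euclidean_space \<Rightarrow>\<^sub>L 'a) \<noteq> 0"
proof
  assume "(id_blinfun :: 'a \<Rightarrow>\<^sub>L 'a) = 0"
  then have "blinfun_apply (id_blinfun :: 'a \<Rightarrow>\<^sub>L 'a) (SOME b. b \<in> Basis) = 0" by simp
  then show False using nonempty_Basis by (metis (no_types, lifting) blinfun_apply_id_blinfun ex_in_conv nonzero_Basis someI_ex)
qed

instance endo :: (euclidean_space) real_normed_algebra_1
  apply standard
  apply (transfer; auto intro!: blinfun_eqI simp: blinfun.bilinear_simps norm_blinfun_compose id_blinfun_ne_zero[symmetric])+
  done

lemma Cauchy_Rep_endo: "Cauchy X \<Longrightarrow> Cauchy (\<lambda>n. Rep_endo (X n))"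
  unfolding Cauchy_def dist_norm dist_endo_def by transfer

instance endo :: (euclidean_space) banach
proof
  fix X :: "nat \<Rightarrow> 'a endo"
  assume "Cauchy X"
  then obtain L where L: "(\<lambda>n. Rep_endo (X n)) \<longlonglongrightarrow> L"
    using Cauchy_Rep_endo convergent_def Cauchy_convergent_iff by blast
  have "X \<longlonglongrightarrow> Abs_endo L"
    using L unfolding LIMSEQ_def dist_norm dist_endo_def
    by (simp add: minus_endo.rep_eq norm_endo.rep_eq Abs_endo_inverse)
  then show "convergent X" by (auto simp: convergent_def)
qed


definition Nmap :: "real^'n^'n \<Rightarrow> real^'n \<Rightarrow> (real^'n) \<times> real \<Rightarrow> (real^'n) \<times> real" where
  "Nmap M B z = (M *v fst z + snd z *\<^sub>R B, 0)"

lemma bl_Nmap: "bounded_linear (Nmap M B)"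
  unfolding Nmap_def
  by (intro bounded_linear_Pair bounded_linear_add bounded_linear_compose[OF matrix_vector_mul_bounded_linear]
      bounded_linear_fst bounded_linear_zero bounded_linear_compose[OF bounded_linear_scaleR_left bounded_linear_snd])

definition Nop :: "real^'n^'n \<Rightarrow> real^'n \<Rightarrow> ((real^'n) \<times> real) endo" where
  "Nop M B = Abs_endo (Blinfun (Nmap M B))"

lemma Rep_Nop: "blinfun_apply (Rep_endo (Nop M B)) = Nmap M B"
  unfolding Nop_def by (simp add: Abs_endo_inverse bounded_linear_Blinfun_apply bl_Nmap)

definition Zf :: "real^'n^'n \<Rightarrow> real^'n \<Rightarrow> real \<Rightarrow> (real^'n) \<times> real \<Rightarrow> (real^'n) \<times> real" where
  "Zf M B t z = blinfun_apply (Rep_endo (exp (t *\<^sub>R Nop M B))) z"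

lemma bl_apply_endo: "bounded_linear (\<lambda>E::'a::euclidean_space endo. blinfun_apply (Rep_endo E) z)"
proof (rule bounded_linear_intro[where K="norm z"])
  fix E F :: "'a endo" and r :: real
  show "blinfun_apply (Rep_endo (E + F)) z = blinfun_apply (Rep_endo E) z + blinfun_apply (Rep_endo F) z"
    by (simp add: plus_endo.rep_eq blinfun.add_left)
  show "blinfun_apply (Rep_endo (r *\<^sub>R E)) z = r *\<^sub>R blinfun_apply (Rep_endo E) z"
    by (simp add: scaleR_endo.rep_eq blinfun.scaleR_left)
  show "norm (blinfun_apply (Rep_endo E) z) \<le> norm E * norm z"
    by (simp add: norm_endo.rep_eq norm_blinfun)
qed

lemma Zf_deriv: "((\<lambda>t. Zf M B t z) has_vector_derivative Nmap M B (Zf M B t z)) (at t)"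
proof -
  have "((\<lambda>t. exp (t *\<^sub>R Nop M B)) has_vector_derivative Nop M B * exp (t *\<^sub>R Nop M B)) (at t)"
    by (rule exp_scaleR_has_vector_derivative_left)
  from bounded_linear.has_vector_derivative[OF bl_apply_endo this, of z]
  show ?thesis unfolding Zf_def by (simp add: times_endo.rep_eq Rep_Nop)
qed

lemma Zf_0[simp]: "Zf M B 0 z = z"
  unfolding Zf_def by (simp add: one_endo.rep_eq)

lemma Zf_snd: "snd (Zf M B t z) = snd z"
proof -
  have "DERIV (\<lambda>t. snd (Zf M B t z)) t :> 0" for t
  proof -
    have "((\<lambda>t. snd (Zf M B t z)) has_vector_derivative snd (Nmap M B (Zf M B t z))) (at t)"
      by (rule bounded_linear.has_vector_derivative[OF bounded_linear_snd Zf_deriv])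
    then show ?thesis by (simp add: Nmap_def has_real_derivative_iff_has_vector_derivative)
  qed
  then have "snd (Zf M B t z) = snd (Zf M B 0 z)" by (rule DERIV_isconst_all[rule_format]) 
  then show ?thesis by simp
qed

lemma Zf_fst_deriv:
  "((\<lambda>t. fst (Zf M B t (x,c))) has_vector_derivative (M *v fst (Zf M B t (x,c)) + c *\<^sub>R B)) (at t)"
proof -
  have "((\<lambda>t. fst (Zf M B t (x,c))) has_vector_derivative fst (Nmap M B (Zf M B t (x,c)))) (at t)"
    by (rule bounded_linear.has_vector_derivative[OF bounded_linear_fst Zf_deriv])
  then show ?thesis by (simp add: Nmap_def Zf_snd)
qed

definition Phi :: "real^'n^'n \<Rightarrow> real^'n \<Rightarrow> real \<Rightarrow> real^'n \<Rightarrow> real^'n" where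
  "Phi M B t x = fst (Zf M B t (x, 0))"
definition Wf :: "real^'n^'n \<Rightarrow> real^'n \<Rightarrow> real \<Rightarrow> real^'n" where
  "Wf M B t = fst (Zf M B t (0, 1))"

lemma Phi_deriv: "((\<lambda>t. Phi M B t x) has_vector_derivative (M *v Phi M B t x)) (at t)"
  using Zf_fst_deriv[of M B x 0 t] by (simp add: Phi_def)
lemma Wf_deriv: "((\<lambda>t. Wf M B t) has_vector_derivative (M *v Wf M B t + B)) (at t)"
  using Zf_fst_deriv[of M B 0 1 t] by (simp add: Wf_def)
lemma Phi_0[simp]: "Phi M B 0 x = x" by (simp add: Phi_def)
lemma Wf_0[simp]: "Wf M B 0 = 0" by (simp add: Wf_def)

lemma sol_intro_everywhere:
  assumes "\<And>t. (x has_vector_derivative (A t *v x t + u t *\<^sub>R B)) (at t)"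
  shows "solves_lti A B a b u x"
  unfolding solves_lti_def
proof
  show "continuous_on {a..b} x"
    by (meson assms continuous_at_imp_continuous_on has_vector_derivative_continuous)
  show "\<exists>F. finite F \<and> (\<forall>t\<in>{a<..<b} - F. (x has_vector_derivative A t *v x t + u t *\<^sub>R B) (at t))"
    using assms by (intro exI[of _ "{}"]) auto
qed

lemma sol_cong:
  assumes "solves_lti A B a b u x"
    and "\<And>t. t \<in> {a..b} \<Longrightarrow> x t = x' t"
    and "\<And>t. t \<in> {a<..<b} \<Longrightarrow> u t = u' t"
    and "\<And>t. t \<in> {a<..<b} \<Longrightarrow> A t = A' t"
  shows "solves_lti A' B a b u' x'"
proof -
  from assms(1) obtain F where cont: "continuous_on {a..b} x" and F: "finite F"
    and D: "\<And>t. t\<in>{a<..<b} - F \<Longrightarrow> (x has_vector_derivative A t *v x t + u t *\<^sub>R B) (at t)"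
    unfolding solves_lti_def by blast
  have "continuous_on {a..b} x'"
    using continuous_on_cong[of "{a..b}" "{a..b}" x x'] cont assms(2) by auto
  moreover have "(x' has_vector_derivative A' t *v x' t + u' t *\<^sub>R B) (at t)" if t: "t\<in>{a<..<b} - F" for t
  proof -
    have "t \<in> {a..b}" using t by auto
    then have "A' t *v x' t + u' t *\<^sub>R B = A t *v x t + u t *\<^sub>R B"
      using assms(2-4) t by auto
    moreover have "(x' has_vector_derivative A t *v x t + u t *\<^sub>R B) (at t)"
      by (rule has_vector_derivative_transform_within_open[OF D[OF t], of "{a<..<b}"])
        (use t assms(2) in auto)
    ultimately show ?thesis by simp
  qed
  ultimately show ?thesis using F unfolding solves_lti_def by blast
qed

lemma sol_glue:
  assumes "a \<le> b" "b \<le> c" "solves_lti A B a b u x" "solves_lti A B b c u x"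
  shows "solves_lti A B a c u x"
proof -
  from assms(3) obtain F1 where c1: "continuous_on {a..b} x" and F1: "finite F1"
    and D1: "\<And>t. t\<in>{a<..<b} - F1 \<Longrightarrow> (x has_vector_derivative A t *v x t + u t *\<^sub>R B) (at t)"
    unfolding solves_lti_def by blast
  from assms(4) obtain F2 where c2: "continuous_on {b..c} x" and F2: "finite F2"
    and D2: "\<And>t. t\<in>{b<..<c} - F2 \<Longrightarrow> (x has_vector_derivative A t *v x t + u t *\<^sub>R B) (at t)"
    unfolding solves_lti_def by blast
  have e: "{a..c} = {a..b} \<union> {b..c}" using assms(1,2) by auto
  have "continuous_on ({a..b} \<union> {b..c}) x"
    by (rule continuous_on_closed_Un[OF closed_atLeastAtMost closed_atLeastAtMost c1 c2])
  then have "continuous_on {a..c} x" by (simp only: e)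
  moreover have "finite (F1 \<union> F2 \<union> {b})" using F1 F2 by simp
  moreover have "(x has_vector_derivative A t *v x t + u t *\<^sub>R B) (at t)"
    if "t\<in>{a<..<c} - (F1 \<union> F2 \<union> {b})" for t
  proof (cases "t < b")
    case True then show ?thesis using that by (intro D1) auto
  next
    case False then show ?thesis using that by (intro D2) auto
  qed
  ultimately show ?thesis unfolding solves_lti_def by (intro conjI exI[of _ "F1 \<union> F2 \<union> {b}"]) auto
qed

lemma sol_add:
  assumes "solves_lti A B a b u x" "solves_lti A B a b v y"
  shows "solves_lti A B a b (\<lambda>t. u t + v t) (\<lambda>t. x t + y t)"
proof -
  from assms(1) obtain F1 where c1: "continuous_on {a..b} x" and F1: "finite F1"
    and D1: "\<And>t. t\<in>{a<..<b} - F1 \<Longrightarrow> (x has_vector_derivative A t *v x t + u t *\<^sub>R B) (at t)"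
    unfolding solves_lti_def by blast
  from assms(2) obtain F2 where c2: "continuous_on {a..b} y" and F2: "finite F2"
    and D2: "\<And>t. t\<in>{a<..<b} - F2 \<Longrightarrow> (y has_vector_derivative A t *v y t + v t *\<^sub>R B) (at t)"
    unfolding solves_lti_def by blast
  have "continuous_on {a..b} (\<lambda>t. x t + y t)" using c1 c2 by (intro continuous_intros)
  moreover have "((\<lambda>t. x t + y t) has_vector_derivative A t *v (x t + y t) + (u t + v t) *\<^sub>R B) (at t)"
    if "t\<in>{a<..<b} - (F1 \<union> F2)" for t
  proof -
    have "((\<lambda>t. x t + y t) has_vector_derivative (A t *v x t + u t *\<^sub>R B) + (A t *v y t + v t *\<^sub>R B)) (at t)"
      using D1 D2 that by (intro has_vector_derivative_add) auto
    moreover have "A t *v (x t + y t) + (u t + v t) *\<^sub>R B = (A t *v x t + u t *\<^sub>R B) + (A t *v y t + v t *\<^sub>R B)"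
      by (simp add: matrix_vector_right_distrib scaleR_add_left)
    ultimately show ?thesis by simp
  qed
  ultimately show ?thesis using F1 F2 unfolding solves_lti_def
    by (intro conjI exI[of _ "F1 \<union> F2"]) auto
qed

lemma sol_scale:
  assumes "solves_lti A B a b u x"
  shows "solves_lti A B a b (\<lambda>t. c * u t) (\<lambda>t. c *\<^sub>R x t)"
proof -
  from assms(1) obtain F1 where c1: "continuous_on {a..b} x" and F1: "finite F1"
    and D1: "\<And>t. t\<in>{a<..<b} - F1 \<Longrightarrow> (x has_vector_derivative A t *v x t + u t *\<^sub>R B) (at t)"
    unfolding solves_lti_def by blast
  have "continuous_on {a..b} (\<lambda>t. c *\<^sub>R x t)" using c1 by (intro continuous_intros)
  moreover have "((\<lambda>t. c *\<^sub>R x t) has_vector_derivative A t *v (c *\<^sub>R x t) + (c * u t) *\<^sub>R B) (at t)"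
    if "t\<in>{a<..<b} - F1" for t
  proof -
    have "((\<lambda>t. c *\<^sub>R x t) has_vector_derivative c *\<^sub>R (A t *v x t + u t *\<^sub>R B)) (at t)"
      using D1 that by (intro bounded_linear.has_vector_derivative[OF bounded_linear_scaleR_right]) auto
    then show ?thesis by (simp add: matrix_vector_mult_scaleR scaleR_add_right)
  qed
  ultimately show ?thesis using F1 unfolding solves_lti_def
    by (intro conjI exI[of _ "F1"]) auto
qed

lemma sol_zero: "solves_lti A B a b (\<lambda>t. 0) (\<lambda>t. 0)"
  by (rule sol_intro_everywhere) simp

lemma sol_sum:
  assumes "finite I" "\<And>i. i \<in> I \<Longrightarrow> solves_lti A B a b (u i) (x i)"
  shows "solves_lti A B a b (\<lambda>t. \<Sum>i\<in>I. u i t) (\<lambda>t. \<Sum>i\<in>I. x i t)"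
  using assms
proof (induction I rule: finite_induct)
  case empty then show ?case using sol_zero by simp
next
  case (insert i I)
  then show ?case by (simp add: sol_add)
qed

lemma sol_Phi: "solves_lti (\<lambda>_. M) B a b (\<lambda>_. 0) (\<lambda>t. Phi M B (t - a) x0)"
proof (rule sol_intro_everywhere)
  fix t
  have "((\<lambda>s. Phi M B s x0) \<circ> (\<lambda>t. t - a) has_vector_derivative 1 *\<^sub>R (M *v Phi M B (t - a) x0)) (at t)"
    by (rule vector_diff_chain_at) (auto intro!: derivative_eq_intros Phi_deriv)
  then show "((\<lambda>t. Phi M B (t - a) x0) has_vector_derivative M *v Phi M B (t - a) x0 + 0 *\<^sub>R B) (at t)"
    by (simp add: o_def)
qed

lemma sol_Wf0: "solves_lti (\<lambda>_. M) B a b (\<lambda>_. 1) (\<lambda>t. Wf M B (t - a))"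
proof (rule sol_intro_everywhere)
  fix t
  have "((\<lambda>s. Wf M B s) \<circ> (\<lambda>t. t - a) has_vector_derivative 1 *\<^sub>R (M *v Wf M B (t - a) + B)) (at t)"
    by (rule vector_diff_chain_at) (auto intro!: derivative_eq_intros Wf_deriv)
  then show "((\<lambda>t. Wf M B (t - a)) has_vector_derivative M *v Wf M B (t - a) + 1 *\<^sub>R B) (at t)"
    by (simp add: o_def)
qed

lemma sol_step:
  assumes "a \<le> r" "r \<le> e"
  shows "solves_lti (\<lambda>_. M) B a e (\<lambda>t. if r \<le> t then 1 else 0) (\<lambda>t. if t \<le> r then 0 else Wf M B (t - r))"
proof (rule sol_glue[OF assms])
  show "solves_lti (\<lambda>_. M) B a r (\<lambda>t. if r \<le> t then 1 else 0) (\<lambda>t. if t \<le> r then 0 else Wf M B (t - r))"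
    by (rule sol_cong[OF sol_zero]) auto
  show "solves_lti (\<lambda>_. M) B r e (\<lambda>t. if r \<le> t then 1 else 0) (\<lambda>t. if t \<le> r then 0 else Wf M B (t - r))"
    by (rule sol_cong[OF sol_Wf0[of M B r e]]) auto
qed

definition iterM :: "real^'n^'n \<Rightarrow> nat \<Rightarrow> real^'n \<Rightarrow> real^'n" where
  "iterM M k y = ((\<lambda>v. M *v v) ^^ k) y"

lemma iterM_0[simp]: "iterM M 0 y = y" by (simp add: iterM_def)
lemma iterM_Suc: "iterM M (Suc k) y = M *v iterM M k y" by (simp add: iterM_def)
lemma iterM_Suc_right: "iterM M (Suc k) y = iterM M k (M *v y)"
  by (simp add: iterM_def funpow_Suc_right del: funpow.simps)

lemma deriv_affine_inner:
  fixes p :: "real^'n"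
  shows "DERIV (\<lambda>t. p \<bullet> (M *v Wf M B t + B)) t :> p \<bullet> (M *v (M *v Wf M B t + B))"
proof -
  have bl: "bounded_linear (\<lambda>y. p \<bullet> (M *v y))"
    by (rule bounded_linear_compose[OF bounded_linear_inner_right matrix_vector_mul_bounded_linear])
  have "((\<lambda>t. p \<bullet> (M *v Wf M B t)) has_vector_derivative p \<bullet> (M *v (M *v Wf M B t + B))) (at t)"
    by (rule bounded_linear.has_vector_derivative[OF bl Wf_deriv])
  then have "((\<lambda>t. p \<bullet> (M *v Wf M B t) + p \<bullet> B) has_vector_derivative p \<bullet> (M *v (M *v Wf M B t + B)) + 0) (at t)"
    by (intro has_vector_derivative_add) (auto intro: has_vector_derivative_const)
  then show ?thesis
    by (simp add: has_real_derivative_iff_has_vector_derivative inner_add_right matrix_vector_right_distrib)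
qed

lemma deriv_Wf_inner:
  fixes p :: "real^'n"
  shows "DERIV (\<lambda>t. p \<bullet> Wf M B t) t :> p \<bullet> (M *v Wf M B t + B)"
proof -
  have "((\<lambda>t. p \<bullet> Wf M B t) has_vector_derivative p \<bullet> (M *v Wf M B t + B)) (at t)"
    by (rule bounded_linear.has_vector_derivative[OF bounded_linear_inner_right Wf_deriv])
  then show ?thesis by (simp add: has_real_derivative_iff_has_vector_derivative)
qed

lemma deriv_zero_on:
  fixes f :: "real \<Rightarrow> real"
  assumes "DERIV f t :> d" "t \<in> {a<..<b}" "\<And>s. s \<in> {a<..<b} \<Longrightarrow> f s = 0"
  shows "d = 0"
proof -
  have "DERIV f t :> 0"
    by (rule has_field_derivative_transform_within_open[of "\<lambda>_. 0" 0 t "{a<..<b}"]) (use assms in auto)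
  then show ?thesis using assms(1) DERIV_unique by blast
qed

lemma span_reach:
  fixes M :: "real^'n^'n" and B v :: "real^'n"
  assumes tau: "\<tau> > 0"
    and good: "\<And>\<phi>. (\<forall>k. \<phi> \<bullet> iterM M k B = 0) \<Longrightarrow> \<phi> \<bullet> v = 0"
  shows "v \<in> span (Wf M B ` {0..\<tau>})"
proof -
  let ?S = "Wf M B ` {0..\<tau>}"
  obtain y z where y: "y \<in> span ?S" and z: "\<And>w. w \<in> span ?S \<Longrightarrow> orthogonal z w" and v: "v = y + z"
    by (rule orthogonal_subspace_decomp_exists[of ?S v]) blast
  define \<psi> where "\<psi> k = ((\<lambda>p. p v* M) ^^ k) z" for k
  have psi: "\<psi> k \<bullet> w = z \<bullet> iterM M k w" for k w
  proof (induction k arbitrary: w)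
    case 0 then show ?case by (simp add: \<psi>_def)
  next
    case (Suc k)
    have "\<psi> (Suc k) \<bullet> w = (\<psi> k v* M) \<bullet> w" by (simp add: \<psi>_def)
    also have "\<dots> = \<psi> k \<bullet> (M *v w)" by (rule dot_lmul_matrix)
    also have "\<dots> = z \<bullet> iterM M k (M *v w)" by (rule Suc)
    finally show ?case by (simp add: iterM_Suc_right)
  qed
  define g where "g k t = \<psi> k \<bullet> (M *v Wf M B t + B)" for k t
  have gd: "DERIV (g k) t :> g (Suc k) t" for k t
  proof -
    have "\<psi> (Suc k) = \<psi> k v* M" by (simp add: \<psi>_def)
    then have "g (Suc k) t = \<psi> k \<bullet> (M *v (M *v Wf M B t + B))"
      by (simp add: g_def dot_lmul_matrix)
    then show ?thesis unfolding g_def[of k] using deriv_affine_inner by (metis g_def)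
  qed
  have f0: "z \<bullet> Wf M B s = 0" if "s \<in> {0..\<tau>}" for s
    using z[of "Wf M B s"] that by (simp add: orthogonal_def span_base)
  have g0: "\<forall>t\<in>{0<..<\<tau>}. g k t = 0" for k
  proof (induction k)
    case 0
    show ?case
    proof
      fix t assume t: "t \<in> {0<..<\<tau>}"
      have "DERIV (\<lambda>t. z \<bullet> Wf M B t) t :> g 0 t"
        using deriv_Wf_inner[of z M B t] by (simp add: g_def \<psi>_def)
      then show "g 0 t = 0" by (rule deriv_zero_on[OF _ t]) (auto intro: f0)
    qed
  next
    case (Suc k)
    show ?case
    proof
      fix t assume t: "t \<in> {0<..<\<tau>}"
      show "g (Suc k) t = 0" by (rule deriv_zero_on[OF gd t]) (use Suc in auto)
    qed
  qed
  have gk0: "g k 0 = 0" for k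
  proof -
    have "isCont (g k) 0" using gd DERIV_isCont by blast
    then have lim: "(g k \<longlongrightarrow> g k 0) (at_right 0)"
      by (simp add: isCont_def filterlim_at_split)
    have "\<forall>\<^sub>F t in at_right 0. g k t = 0"
      unfolding eventually_at_right_field using tau g0 by (intro exI[of _ \<tau>]) auto
    then have "(g k \<longlongrightarrow> 0) (at_right 0)" by (rule tendsto_eventually)
    then show ?thesis using lim tendsto_unique[OF trivial_limit_at_right_real] by blast
  qed
  have "z \<bullet> iterM M k B = 0" for k
    using gk0[of k] psi[of k B] by (simp add: g_def)
  then have "z \<bullet> v = 0" by (rule good[rule_format])
  moreover have "z \<bullet> y = 0" using z[OF y] by (simp add: orthogonal_def)
  ultimately have "z \<bullet> z = 0" by (simp add: v inner_add_right)
  then have "z = 0" by simp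
  then show ?thesis using y v by simp
qed

definition pcw :: "(real \<Rightarrow> real) \<Rightarrow> bool" where
  "pcw u \<longleftrightarrow> (\<exists>D. finite D \<and> (\<forall>s. s \<notin> D \<longrightarrow> isCont u s) \<and>
      (\<forall>s. \<exists>L. (u \<longlongrightarrow> L) (at_left s)) \<and> (\<forall>s. \<exists>R. (u \<longlongrightarrow> R) (at_right s)))"

lemma pcw_imp: "pcw u \<Longrightarrow> piecewise_continuous_on a b u"
proof -
  assume "pcw u"
  then obtain D where D: "finite D" and c: "\<forall>s. s \<notin> D \<longrightarrow> isCont u s"
    and l: "\<forall>s. \<exists>L. (u \<longlongrightarrow> L) (at_left s)" and r: "\<forall>s. \<exists>R. (u \<longlongrightarrow> R) (at_right s)"
    unfolding pcw_def by blast
  have "continuous_on ({a..b} - D) u"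
    using c by (intro continuous_at_imp_continuous_on) auto
  moreover have "\<exists>L. (u \<longlongrightarrow> L) (at s within {a..<s})" for s
  proof -
    from l obtain L where "(u \<longlongrightarrow> L) (at_left s)" by blast
    then have "(u \<longlongrightarrow> L) (at s within {a..<s})" by (rule tendsto_within_subset) auto
    then show ?thesis by blast
  qed
  moreover have "\<exists>R. (u \<longlongrightarrow> R) (at s within {s<..b})" for s
  proof -
    from r obtain R where "(u \<longlongrightarrow> R) (at_right s)" by blast
    then have "(u \<longlongrightarrow> R) (at s within {s<..b})" by (rule tendsto_within_subset) auto
    then show ?thesis by blast
  qed
  ultimately show ?thesis unfolding piecewise_continuous_on_def using D by blast
qed

lemma pcw_add: "pcw u \<Longrightarrow> pcw v \<Longrightarrow> pcw (\<lambda>t. u t + v t)"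
  unfolding pcw_def
proof (elim exE conjE)
  fix D E assume "finite D" "finite E" and c1: "\<forall>s. s \<notin> D \<longrightarrow> isCont u s" and c2: "\<forall>s. s \<notin> E \<longrightarrow> isCont v s"
    and l1: "\<forall>s. \<exists>L. (u \<longlongrightarrow> L) (at_left s)" and r1: "\<forall>s. \<exists>R. (u \<longlongrightarrow> R) (at_right s)"
    and l2: "\<forall>s. \<exists>L. (v \<longlongrightarrow> L) (at_left s)" and r2: "\<forall>s. \<exists>R. (v \<longlongrightarrow> R) (at_right s)"
  show "\<exists>D. finite D \<and> (\<forall>s. s \<notin> D \<longrightarrow> isCont (\<lambda>t. u t + v t) s) \<and>
      (\<forall>s. \<exists>L. ((\<lambda>t. u t + v t) \<longlongrightarrow> L) (at_left s)) \<and> (\<forall>s. \<exists>R. ((\<lambda>t. u t + v t) \<longlongrightarrow> R) (at_right s))"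
  proof (intro exI[of _ "D \<union> E"] conjI allI impI)
    show "finite (D \<union> E)" using \<open>finite D\<close> \<open>finite E\<close> by simp
    fix s
    show "s \<notin> D \<union> E \<Longrightarrow> isCont (\<lambda>t. u t + v t) s" using c1 c2 by (auto intro: continuous_intros)
    show "\<exists>L. ((\<lambda>t. u t + v t) \<longlongrightarrow> L) (at_left s)"
    proof -
      obtain L1 L2 where "(u \<longlongrightarrow> L1) (at_left s)" "(v \<longlongrightarrow> L2) (at_left s)" using l1 l2 by blast
      then show ?thesis using tendsto_add by blast
    qed
    show "\<exists>L. ((\<lambda>t. u t + v t) \<longlongrightarrow> L) (at_right s)"
    proof -
      obtain L1 L2 where "(u \<longlongrightarrow> L1) (at_right s)" "(v \<longlongrightarrow> L2) (at_right s)" using r1 r2 by blast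
      then show ?thesis using tendsto_add by blast
    qed
  qed
qed

lemma pcw_scale: "pcw u \<Longrightarrow> pcw (\<lambda>t. c * u t)"
  unfolding pcw_def
proof (elim exE conjE)
  fix D assume "finite D" and c1: "\<forall>s. s \<notin> D \<longrightarrow> isCont u s"
    and l1: "\<forall>s. \<exists>L. (u \<longlongrightarrow> L) (at_left s)" and r1: "\<forall>s. \<exists>R. (u \<longlongrightarrow> R) (at_right s)"
  show "\<exists>D. finite D \<and> (\<forall>s. s \<notin> D \<longrightarrow> isCont (\<lambda>t. c * u t) s) \<and>
      (\<forall>s. \<exists>L. ((\<lambda>t. c * u t) \<longlongrightarrow> L) (at_left s)) \<and> (\<forall>s. \<exists>R. ((\<lambda>t. c * u t) \<longlongrightarrow> R) (at_right s))"
  proof (intro exI[of _ "D"] conjI allI impI)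
    show "finite D" by fact
    fix s
    show "s \<notin> D \<Longrightarrow> isCont (\<lambda>t. c * u t) s" using c1 by (auto intro: continuous_intros)
    show "\<exists>L. ((\<lambda>t. c * u t) \<longlongrightarrow> L) (at_left s)"
    proof -
      obtain L1 where "(u \<longlongrightarrow> L1) (at_left s)" using l1 by blast
      then show ?thesis using tendsto_mult_left by blast
    qed
    show "\<exists>L. ((\<lambda>t. c * u t) \<longlongrightarrow> L) (at_right s)"
    proof -
      obtain L1 where "(u \<longlongrightarrow> L1) (at_right s)" using r1 by blast
      then show ?thesis using tendsto_mult_left by blast
    qed
  qed
qed

lemma pcw_const: "pcw (\<lambda>t. c)"
  unfolding pcw_def by (intro exI[of _ "{}"]) auto

lemma pcw_sum: "finite I \<Longrightarrow> (\<And>i. i \<in> I \<Longrightarrow> pcw (u i)) \<Longrightarrow> pcw (\<lambda>t. \<Sum>i\<in>I. u i t)"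
proof (induction I rule: finite_induct)
  case empty then show ?case using pcw_const by simp
next
  case (insert i I) then show ?case by (simp add: pcw_add)
qed

lemma ev_left: "\<forall>\<^sub>F t in at_left (s::real). t < s"
  by (simp add: eventually_at_filter)
lemma ev_right: "\<forall>\<^sub>F t in at_right (s::real). s < t"
  by (simp add: eventually_at_filter)

lemma pcw_step_gen:
  fixes r :: real
  assumes "\<And>t. t < r \<Longrightarrow> h t = 0" "\<And>t. r < t \<Longrightarrow> h t = 1"
  shows "pcw h"
  unfolding pcw_def
proof (intro exI[of _ "{r}"] conjI allI impI)
  show "finite {r}" by simp
  fix s
  show "s \<notin> {r} \<Longrightarrow> isCont h s"
  proof -
    assume "s \<notin> {r}"
    then have "s < r \<or> r < s" by auto
    then show "isCont h s"
    proof
      assume sr: "s < r"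
      have "\<forall>\<^sub>F t in at s. t < r" using order_tendstoD(2)[OF tendsto_ident_at sr] .
      then have "\<forall>\<^sub>F t in at s. h t = h s" by eventually_elim (use assms sr in auto)
      then show ?thesis unfolding isCont_def by (rule tendsto_eventually)
    next
      assume sr: "r < s"
      have "\<forall>\<^sub>F t in at s. r < t" using order_tendstoD(1)[OF tendsto_ident_at sr] .
      then have "\<forall>\<^sub>F t in at s. h t = h s" by eventually_elim (use assms sr in auto)
      then show ?thesis unfolding isCont_def by (rule tendsto_eventually)
    qed
  qed
  show "\<exists>L. (h \<longlongrightarrow> L) (at_left s)"
  proof (cases "s \<le> r")
    case True
    have "\<forall>\<^sub>F t in at_left s. h t = 0" using ev_left[of s] by eventually_elim (use assms True in auto)
    then show ?thesis by (blast intro: tendsto_eventually)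
  next
    case False
    have "\<forall>\<^sub>F t in at_left s. r < t" using order_tendstoD(1)[OF tendsto_ident_at, of r s] False by auto
    then have "\<forall>\<^sub>F t in at_left s. h t = 1" by eventually_elim (use assms in auto)
    then show ?thesis by (blast intro: tendsto_eventually)
  qed
  show "\<exists>L. (h \<longlongrightarrow> L) (at_right s)"
  proof (cases "r \<le> s")
    case True
    have "\<forall>\<^sub>F t in at_right s. h t = 1" using ev_right[of s] by eventually_elim (use assms True in auto)
    then show ?thesis by (blast intro: tendsto_eventually)
  next
    case False
    have "\<forall>\<^sub>F t in at_right s. t < r" using order_tendstoD(2)[OF tendsto_ident_at, of s r] False by auto
    then have "\<forall>\<^sub>F t in at_right s. h t = 0" by eventually_elim (use assms in auto)
    then show ?thesis by (blast intro: tendsto_eventually)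
  qed
qed

lemma pcw_H: "pcw (\<lambda>t. if r \<le> t then 1 else 0)"
  by (rule pcw_step_gen[of r]) auto
lemma pcw_H': "pcw (\<lambda>t. if r < t then 1 else 0)"
  by (rule pcw_step_gen[of r]) auto

definition dep :: "('n \<Rightarrow> 'n \<Rightarrow> sign) \<Rightarrow> 'n \<Rightarrow> 'n \<Rightarrow> nat" where
  "dep S l j = (LEAST k. (edge S ^^ k) l j)"

definition par :: "('n \<Rightarrow> 'n \<Rightarrow> sign) \<Rightarrow> 'n \<Rightarrow> 'n \<Rightarrow> 'n" where
  "par S l j = (SOME p. (edge S ^^ (dep S l j - 1)) l p \<and> edge S p j)"

lemma dep_spec: "(edge S)\<^sup>*\<^sup>* l j \<Longrightarrow> (edge S ^^ dep S l j) l j"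
  unfolding dep_def rtranclp_power by (rule LeastI_ex)

lemma dep_le: "(edge S ^^ k) l j \<Longrightarrow> dep S l j \<le> k"
  unfolding dep_def by (rule Least_le)

lemma dep_l: "dep S l l = 0"
  using dep_le[of 0 S l l] by simp

lemma dep_pos: "(edge S)\<^sup>*\<^sup>* l j \<Longrightarrow> j \<noteq> l \<Longrightarrow> dep S l j > 0"
  using dep_spec[of S l j] by (cases "dep S l j") auto

lemma par_spec:
  assumes "(edge S)\<^sup>*\<^sup>* l j" "j \<noteq> l"
  shows "edge S (par S l j) j \<and> dep S l (par S l j) = dep S l j - 1"
proof -
  obtain k where k: "dep S l j = Suc k" using dep_pos[OF assms] by (cases "dep S l j") auto
  have "(edge S ^^ Suc k) l j" using dep_spec[OF assms(1)] k by simp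
  then have "\<exists>p. (edge S ^^ k) l p \<and> edge S p j" by (rule relpowp_Suc_E) blast
  then have p: "(edge S ^^ k) l (par S l j) \<and> edge S (par S l j) j"
    unfolding par_def k by (simp, rule someI_ex)
  let ?p = "par S l j"
  have "dep S l ?p \<le> k" using dep_le[of k S l ?p] p by simp
  moreover have "\<not> dep S l ?p < k"
  proof
    assume lt: "dep S l ?p < k"
    have "(edge S ^^ dep S l ?p) l ?p" using p relpowp_imp_rtranclp dep_spec by metis
    then have "(edge S ^^ Suc (dep S l ?p)) l j" using p relpowp_Suc_I by metis
    then have "dep S l j \<le> Suc (dep S l ?p)" by (rule dep_le)
    then show False using lt k by simp
  qed
  ultimately show ?thesis using p k by simp
qed

fun sv :: "sign \<Rightarrow> real" where
  "sv Plus = 1" | "sv Minus = -1" | "sv Zero = 0"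

lemma sv_nz: "s \<noteq> Zero \<Longrightarrow> sv s \<noteq> 0"
  by (cases s) auto

definition Aeps :: "('n::finite \<Rightarrow> 'n \<Rightarrow> sign) \<Rightarrow> 'n \<Rightarrow> real \<Rightarrow> real^'n^'n" where
  "Aeps S l e = (\<chi> j m. (if j \<noteq> l \<and> m = par S l j then 1 else e) * sv (S j m))"

lemma Aeps_pattern: "e > 0 \<Longrightarrow> has_sign_pattern S (Aeps S l e)"
  unfolding has_sign_pattern_def Aeps_def by auto

definition Bv :: "'n::finite \<Rightarrow> real \<Rightarrow> real^'n" where
  "Bv l b1 = (\<chi> j. if j = l then b1 else 0)"

lemma nz0:
  assumes reach: "\<forall>j. (edge S)\<^sup>*\<^sup>* l j" and b1: "b1 \<noteq> 0"
  shows "\<forall>j. dep S l j = k \<longrightarrow> iterM (Aeps S l 0) k (Bv l b1) $ j \<noteq> 0"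
proof (induction k)
  case 0
  show ?case
  proof (intro allI impI)
    fix j assume "dep S l j = 0"
    then have "j = l" using dep_pos reach by fastforce
    then show "iterM (Aeps S l 0) 0 (Bv l b1) $ j \<noteq> 0" using b1 by (simp add: Bv_def)
  qed
next
  case (Suc k)
  show ?case
  proof (intro allI impI)
    fix j assume dj: "dep S l j = Suc k"
    then have jl: "j \<noteq> l" using dep_l[of S l] by auto
    let ?p = "par S l j"
    have ps: "edge S ?p j" "dep S l ?p = k" using par_spec[OF reach[rule_format] jl] dj by auto
    let ?y = "iterM (Aeps S l 0) k (Bv l b1)"
    have "iterM (Aeps S l 0) (Suc k) (Bv l b1) $ j = (\<Sum>m\<in>UNIV. Aeps S l 0 $ j $ m * ?y $ m)"
      by (simp add: iterM_Suc matrix_vector_mult_def)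
    also have "\<dots> = (\<Sum>m\<in>UNIV. if m = ?p then sv (S j m) * ?y $ m else 0)"
      by (rule sum.cong) (auto simp: Aeps_def jl)
    also have "\<dots> = sv (S j ?p) * ?y $ ?p" by (simp add: sum.delta)
    finally show "iterM (Aeps S l 0) (Suc k) (Bv l b1) $ j \<noteq> 0"
      using Suc[rule_format, OF ps(2)] sv_nz ps(1) unfolding edge_def by simp
  qed
qed

lemma Aeps_cont: "isCont (\<lambda>e. Aeps S l e $ i $ m) x"
  by (cases "i \<noteq> l \<and> m = par S l i") (auto simp: Aeps_def intro: continuous_intros)

lemma iter_cont: "isCont (\<lambda>e. iterM (Aeps S l e) k y $ i) x"
proof (induction k arbitrary: i)
  case 0 then show ?case by simp
next
  case (Suc k)
  show ?case
    by (simp add: iterM_Suc matrix_vector_mult_def) (intro continuous_intros Aeps_cont Suc)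
qed

lemma exists_eps:
  assumes reach: "\<forall>j. (edge S)\<^sup>*\<^sup>* l j" and b1: "b1 \<noteq> 0"
  shows "\<exists>e>0. \<forall>j. iterM (Aeps S l e) (dep S l j) (Bv l b1) $ j \<noteq> 0"
proof -
  have "\<forall>\<^sub>F e in at_right 0. iterM (Aeps S l e) (dep S l j) (Bv l b1) $ j \<noteq> 0" for j
  proof -
    have "((\<lambda>e. iterM (Aeps S l e) (dep S l j) (Bv l b1) $ j) \<longlongrightarrow> iterM (Aeps S l 0) (dep S l j) (Bv l b1) $ j) (at_right 0)"
      using iter_cont unfolding isCont_def by (rule filterlim_at_split[THEN iffD1, THEN conjunct2])
    then show ?thesis by (rule tendsto_imp_eventually_ne) (use nz0[OF reach b1] in auto)
  qed
  then have "\<forall>\<^sub>F e in at_right 0. \<forall>j. iterM (Aeps S l e) (dep S l j) (Bv l b1) $ j \<noteq> 0"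
    by (rule eventually_all_finite)
  then have "\<forall>\<^sub>F e in at_right 0. e > 0 \<and> (\<forall>j. iterM (Aeps S l e) (dep S l j) (Bv l b1) $ j \<noteq> 0)"
    using ev_right[of 0] by eventually_elim auto
  then show ?thesis using eventually_happens trivial_limit_at_right_real by blast
qed

definition good :: "real^'n^'n \<Rightarrow> real^'n \<Rightarrow> real^'n \<Rightarrow> bool" where
  "good A B v \<longleftrightarrow> (\<forall>\<phi>. (\<forall>k. \<phi> \<bullet> iterM A k B = 0) \<longrightarrow> \<phi> \<bullet> v = 0)"

lemma good_iter: "good A B (iterM A k B)" by (simp add: good_def)
lemma good_add: "good A B v \<Longrightarrow> good A B w \<Longrightarrow> good A B (v + c *\<^sub>R w)"
  by (simp add: good_def inner_add_right)
lemma good_zero: "good A B 0" by (simp add: good_def)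

lemma choose_lambda:
  fixes v u :: "real^'n::finite"
  shows "\<exists>c. \<forall>j. u $ j \<noteq> 0 \<longrightarrow> v $ j + c * u $ j \<noteq> 0"
proof -
  let ?bad = "(\<lambda>j. - (v $ j) / (u $ j)) ` UNIV"
  have "infinite (UNIV - ?bad)" by (rule Diff_infinite_finite) (auto simp: infinite_UNIV_char_0)
  then obtain c where c: "c \<notin> ?bad" using infinite_imp_nonempty by blast
  show ?thesis
  proof (intro exI allI impI)
    fix j assume u: "u $ j \<noteq> 0"
    show "v $ j + c * u $ j \<noteq> 0"
    proof
      assume "v $ j + c * u $ j = 0"
      then have "c = - (v $ j) / (u $ j)" using u by (simp add: field_simps)
      then show False using c by auto
    qed
  qed
qed

lemma exists_nz_vec:
  fixes A :: "real^'n::finite^'n" and B :: "real^'n"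
  assumes nz: "\<forall>j. iterM A (dp j) B $ j \<noteq> 0"
  shows "\<exists>v. good A B v \<and> (\<forall>j. dp j < N \<longrightarrow> v $ j \<noteq> 0)"
proof (induction N)
  case 0 then show ?case using good_zero by blast
next
  case (Suc N)
  then obtain v where v: "good A B v" "\<forall>j. dp j < N \<longrightarrow> v $ j \<noteq> 0" by blast
  let ?u = "iterM A N B"
  obtain c where c: "\<forall>j. ?u $ j \<noteq> 0 \<longrightarrow> v $ j + c * ?u $ j \<noteq> 0" using choose_lambda by blast
  show ?case
  proof (intro exI conjI allI impI)
    show "good A B (v + c *\<^sub>R ?u)" by (rule good_add[OF v(1) good_iter])
    fix j assume "dp j < Suc N"
    then consider "dp j < N" | "dp j = N" by linarith
    then show "(v + c *\<^sub>R ?u) $ j \<noteq> 0"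
    proof cases
      case 1 then show ?thesis using v(2) c by (cases "?u $ j = 0") auto
    next
      case 2 then show ?thesis using nz c by auto
    qed
  qed
qed

lemma exists_nz_vec_all:
  fixes A :: "real^'n::finite^'n" and B :: "real^'n"
  assumes nz: "\<forall>j. iterM A (dp j) B $ j \<noteq> 0"
  shows "\<exists>v. good A B v \<and> (\<forall>j. v $ j \<noteq> 0)"
proof -
  let ?N = "Suc (Max (range dp))"
  have "dp j < ?N" for j by (simp add: le_imp_less_Suc)
  then show ?thesis using exists_nz_vec[OF nz, of ?N] by blast
qed

lemma pcw_diff: "pcw u \<Longrightarrow> pcw v \<Longrightarrow> pcw (\<lambda>t. u t - v t)"
proof -
  assume "pcw u" "pcw v"
  then have "pcw (\<lambda>t. u t + (-1) * v t)" by (intro pcw_add pcw_scale)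
  then show ?thesis by simp
qed

lemma span_sum_rep:
  fixes v :: "'b::real_vector" and f :: "'c \<Rightarrow> 'b"
  assumes "v \<in> span (f ` T)"
  shows "\<exists>(F::'b set) c g. finite F \<and> (\<forall>e\<in>F. g e \<in> T) \<and> v = (\<Sum>e\<in>F. c e *\<^sub>R f (g e))"
proof -
  have "v \<in> {(\<Sum>a\<in>t. r a *\<^sub>R a) | t r. finite t \<and> t \<subseteq> f ` T}"
    using assms by (simp only: span_explicit)
  then obtain t r where t: "finite t" "t \<subseteq> f ` T" and v: "v = (\<Sum>a\<in>t. r a *\<^sub>R a)"
    by blast
  define g where "g a = (SOME x. x \<in> T \<and> f x = a)" for a
  have g: "g a \<in> T \<and> f (g a) = a" if "a \<in> t" for a
  proof -
    have "a \<in> f ` T" using t(2) that by blast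
    then have "\<exists>x. x \<in> T \<and> f x = a" by blast
    then show ?thesis unfolding g_def by (rule someI_ex)
  qed
  have "v = (\<Sum>a\<in>t. r a *\<^sub>R f (g a))" unfolding v by (rule sum.cong) (simp_all add: g)
  moreover have "\<forall>e\<in>t. g e \<in> T" using g by blast
  ultimately show ?thesis using t(1) by blast
qed

definition dd :: "real^'n \<Rightarrow> 'n \<Rightarrow> real" where
  "dd v j = (if v $ j > 0 then 2 else 1/2)"

lemma dd_pos: "dd v j > 0" by (simp add: dd_def)
lemma dd_ne[simp]: "dd v j \<noteq> 0" by (simp add: dd_def)

definition A2of :: "real^'n^'n \<Rightarrow> real^'n \<Rightarrow> real^'n^'n" where
  "A2of A v = (\<chi> j m. dd v j * A $ j $ m / dd v m)"

definition Dv :: "real^'n \<Rightarrow> real^'n" where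
  "Dv v = (\<chi> j. dd v j * v $ j)"

lemma A2_pattern: "has_sign_pattern S A \<Longrightarrow> has_sign_pattern S (A2of A v)"
  unfolding has_sign_pattern_def A2of_def
  using dd_pos[of v]
  by (auto simp: divide_pos_pos mult_pos_neg divide_neg_pos)

lemma iter_A2:
  "iterM (A2of A v) k (Bv l b1) = (1 / dd v l) *\<^sub>R (\<chi> j. dd v j * iterM A k (Bv l b1) $ j)"
proof (induction k)
  case 0
  show ?case using dd_pos[of v l] by (simp add: vec_eq_iff Bv_def)
next
  case (Suc k)
  let ?y = "iterM A k (Bv l b1)"
  show ?case
  proof (simp only: vec_eq_iff, rule allI)
    fix i
    have "iterM (A2of A v) (Suc k) (Bv l b1) $ i =
          (\<Sum>m\<in>UNIV. A2of A v $ i $ m * iterM (A2of A v) k (Bv l b1) $ m)"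
      by (simp add: iterM_Suc matrix_vector_mult_def)
    also have "\<dots> = (\<Sum>m\<in>UNIV. (dd v i * A $ i $ m / dd v m) * ((1 / dd v l) * (dd v m * ?y $ m)))"
      unfolding Suc by (simp add: A2of_def)
    also have "\<dots> = (\<Sum>m\<in>UNIV. ((1 / dd v l) * dd v i) * (A $ i $ m * ?y $ m))"
      by (rule sum.cong) (auto simp: field_simps)
    also have "\<dots> = ((1 / dd v l) * dd v i) * (A *v ?y) $ i"
      by (simp add: sum_distrib_left matrix_vector_mult_def)
    finally show "iterM (A2of A v) (Suc k) (Bv l b1) $ i =
        ((1 / dd v l) *\<^sub>R (\<chi> j. dd v j * iterM A (Suc k) (Bv l b1) $ j)) $ i"
      by (simp add: iterM_Suc)
  qed
qed

lemma good_Dv: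
  assumes "good A (Bv l b1) v"
  shows "good (A2of A v) (Bv l b1) (Dv v)"
  unfolding good_def
proof (intro allI impI)
  fix \<phi> :: "real^'a" assume h: "\<forall>k. \<phi> \<bullet> iterM (A2of A v) k (Bv l b1) = 0"
  define \<psi> where "\<psi> = (\<chi> j. \<phi> $ j * dd v j)"
  have "\<psi> \<bullet> iterM A k (Bv l b1) = 0" for k
  proof -
    have "\<phi> \<bullet> iterM (A2of A v) k (Bv l b1) = (1 / dd v l) * (\<psi> \<bullet> iterM A k (Bv l b1))"
      by (simp add: iter_A2 \<psi>_def inner_vec_def sum_distrib_left ac_simps)
    then show ?thesis using h dd_pos[of v l] by simp
  qed
  then have "\<psi> \<bullet> v = 0" using assms unfolding good_def by blast
  then show "\<phi> \<bullet> Dv v = 0" by (simp add: \<psi>_def Dv_def inner_vec_def ac_simps)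
qed

lemma Dv_pos: "v $ j \<noteq> 0 \<Longrightarrow> (Dv v - v) $ j > 0"
  by (auto simp: Dv_def dd_def)

lemma good_neg: "good A B v \<Longrightarrow> good A B (- v)"
  by (simp add: good_def)

lemma Phi_tendsto: "((\<lambda>t. Phi M B t x) \<longlongrightarrow> x) (at_right 0)"
proof -
  have "isCont (\<lambda>t. Phi M B t x) 0"
    using has_vector_derivative_continuous[OF Phi_deriv] by blast
  then have "((\<lambda>t. Phi M B t x) \<longlongrightarrow> Phi M B 0 x) (at 0)" by (simp add: isCont_def)
  then show ?thesis by (simp add: filterlim_at_split)
qed

lemma herd_core:
  fixes A A2 :: "real^'n::finite^'n" and B v w :: "real^'n"
  assumes tau: "0 < \<tau>" "\<tau> \<le> 1"
    and gv: "good A B (- v)" and gw: "good A2 B w"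
    and ypos: "\<forall>j. (Phi A2 B \<tau> (- v) + w) $ j > 0"
  shows "completely_herdable (two_snapshots A A2 1) B 0 (1 + \<tau>)"
  unfolding completely_herdable_def
proof (intro allI impI)
  fix x0 :: "real^'n" and h :: real
  assume "h > 0"
  have vspan: "- v \<in> span (Wf A B ` {0..1})" by (rule span_reach) (use gv in \<open>auto simp: good_def\<close>)
  obtain F1 :: "(real^'n) set" and c1 g1 where F1: "finite F1" "\<forall>e\<in>F1. g1 e \<in> {0..1}"
    and v1: "- v = (\<Sum>e\<in>F1. c1 e *\<^sub>R Wf A B (g1 e))"
    using span_sum_rep[OF vspan] by blast
  have wspan: "w \<in> span (Wf A2 B ` {0..\<tau>})" by (rule span_reach) (use gw tau in \<open>auto simp: good_def\<close>)
  obtain F2 :: "(real^'n) set" and c2 g2 where F2: "finite F2" "\<forall>e\<in>F2. g2 e \<in> {0..\<tau>}"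
    and w2: "w = (\<Sum>e\<in>F2. c2 e *\<^sub>R Wf A2 B (g2 e))"
    using span_sum_rep[OF wspan] by blast
  define T where "T = 1 + \<tau>"
  define uf where "uf t = (\<Sum>e\<in>F1. c1 e * ((if 1 - g1 e \<le> t then 1 else 0) - (if 1 \<le> t then 1 else 0)))
      + (\<Sum>e\<in>F2. c2 e * ((if T - g2 e \<le> t then 1 else 0) - (if T < t then 1 else 0)))" for t :: real
  define X1 where "X1 t = (\<Sum>e\<in>F1. c1 e *\<^sub>R (if t \<le> 1 - g1 e then 0 else Wf A B (t - (1 - g1 e))))" for t
  define X2 where "X2 t = Phi A2 B (t - 1) (- v) +
      (\<Sum>e\<in>F2. c2 e *\<^sub>R (if t \<le> T - g2 e then 0 else Wf A2 B (t - (T - g2 e))))" for t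
  define Xf where "Xf t = (if t \<le> 1 then X1 t else X2 t)" for t
  define Xh where "Xh t = (if t \<le> 1 then Phi A B t x0 else Phi A2 B (t - 1) (Phi A B 1 x0))" for t

  have s1: "solves_lti (\<lambda>_. A) B 0 1 (\<lambda>t. \<Sum>e\<in>F1. c1 e * (if 1 - g1 e \<le> t then 1 else 0)) X1"
    unfolding X1_def
    by (rule sol_sum[OF F1(1)], rule sol_scale, rule sol_step) (use F1(2) in auto)
  have s2: "solves_lti (\<lambda>_. A2) B 1 T (\<lambda>t. 0 + (\<Sum>e\<in>F2. c2 e * (if T - g2 e \<le> t then 1 else 0))) X2"
    unfolding X2_def
    by (rule sol_add[OF sol_Phi], rule sol_sum[OF F2(1)], rule sol_scale, rule sol_step)
      (use F2(2) in \<open>auto simp: T_def\<close>)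
  have X1_1: "X1 1 = - v"
    unfolding X1_def v1 by (rule sum.cong) (use F1(2) in auto)
  have X2_1: "X2 1 = - v"
    unfolding X2_def using F2(2) tau by (auto simp: T_def intro!: sum.neutral)
  have sf1: "solves_lti (two_snapshots A A2 1) B 0 1 uf Xf"
  proof (rule sol_cong[OF s1])
    fix t :: real assume "t \<in> {0..1}"
    then show "X1 t = Xf t" by (simp add: Xf_def)
  next
    fix t :: real assume t: "t \<in> {0<..<1}"
    have a: "(\<Sum>e\<in>F1. c1 e * ((if 1 - g1 e \<le> t then 1 else 0) - (if 1 \<le> t then 1 else 0)))
        = (\<Sum>e\<in>F1. c1 e * (if 1 - g1 e \<le> t then 1 else 0))"
      using t by simp
    have b: "(\<Sum>e\<in>F2. c2 e * ((if T - g2 e \<le> t then 1 else 0) - (if T < t then 1 else 0))) = 0"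
    proof (rule sum.neutral, rule ballI)
      fix e assume "e \<in> F2"
      then have "g2 e \<le> \<tau>" using F2(2) by auto
      then show "c2 e * ((if T - g2 e \<le> t then 1 else 0) - (if T < t then 1 else 0)) = 0"
        using t tau by (auto simp: T_def)
    qed
    show "(\<Sum>e\<in>F1. c1 e * (if 1 - g1 e \<le> t then 1 else 0)) = uf t"
      unfolding uf_def a b by simp
  next
    fix t :: real assume "t \<in> {0<..<1}"
    then show "A = two_snapshots A A2 1 t" by (simp add: two_snapshots_def)
  qed
  have sf2: "solves_lti (two_snapshots A A2 1) B 1 T uf Xf"
  proof (rule sol_cong[OF s2])
    fix t :: real assume "t \<in> {1..T}"
    then show "X2 t = Xf t" using X1_1 X2_1 by (cases "t = 1") (auto simp: Xf_def)
  next
    fix t :: real assume t: "t \<in> {1<..<T}"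
    have a: "(\<Sum>e\<in>F1. c1 e * ((if 1 - g1 e \<le> t then 1 else 0) - (if 1 \<le> t then 1 else 0))) = 0"
    proof (rule sum.neutral, rule ballI)
      fix e assume "e \<in> F1"
      then have "0 \<le> g1 e" using F1(2) by auto
      then show "c1 e * ((if 1 - g1 e \<le> t then 1 else 0) - (if 1 \<le> t then 1 else 0)) = 0"
        using t by auto
    qed
    have b: "(\<Sum>e\<in>F2. c2 e * ((if T - g2 e \<le> t then 1 else 0) - (if T < t then 1 else 0)))
        = (\<Sum>e\<in>F2. c2 e * (if T - g2 e \<le> t then 1 else 0))"
      using t by simp
    show "0 + (\<Sum>e\<in>F2. c2 e * (if T - g2 e \<le> t then 1 else 0)) = uf t"
      unfolding uf_def a b by simp
  next
    fix t :: real assume "t \<in> {1<..<T}"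
    then show "A2 = two_snapshots A A2 1 t" by (simp add: two_snapshots_def)
  qed
  have sf: "solves_lti (two_snapshots A A2 1) B 0 T uf Xf"
    by (rule sol_glue[OF _ _ sf1 sf2]) (use tau in \<open>auto simp: T_def\<close>)
  have sh1: "solves_lti (two_snapshots A A2 1) B 0 1 (\<lambda>_. 0) Xh"
    by (rule sol_cong[OF sol_Phi[of A B 0 1 x0]]) (auto simp: Xh_def two_snapshots_def)
  have sh2: "solves_lti (two_snapshots A A2 1) B 1 T (\<lambda>_. 0) Xh"
    by (rule sol_cong[OF sol_Phi[of A2 B 1 T "Phi A B 1 x0"]]) (auto simp: Xh_def two_snapshots_def)
  have sh: "solves_lti (two_snapshots A A2 1) B 0 T (\<lambda>_. 0) Xh"
    by (rule sol_glue[OF _ _ sh1 sh2]) (use tau in \<open>auto simp: T_def\<close>)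

  define y where "y = Phi A2 B \<tau> (- v) + w"
  define H where "H = Xh T"
  have XfT: "Xf T = y"
  proof -
    have "Xf T = X2 T" using tau by (simp add: Xf_def T_def)
    also have "\<dots> = y" unfolding X2_def y_def w2
      using F2(2) by (auto simp: T_def intro!: sum.cong)
    finally show ?thesis .
  qed
  define lam where "lam = (\<Sum>j\<in>UNIV. (\<bar>h\<bar> + \<bar>H $ j\<bar>) / y $ j)"
  have lam_ge: "lam * y $ j \<ge> \<bar>h\<bar> + \<bar>H $ j\<bar>" for j
  proof -
    have yj: "y $ j > 0" using ypos by (simp add: y_def)
    have "(\<bar>h\<bar> + \<bar>H $ j\<bar>) / y $ j \<le> lam"
      unfolding lam_def
    proof (rule member_le_sum)
      fix i assume "i \<in> UNIV - {j}"
      have "y $ i > 0" using ypos by (simp add: y_def)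
      then show "0 \<le> (\<bar>h\<bar> + \<bar>H $ i\<bar>) / y $ i" by simp
    qed auto
    then show ?thesis using yj by (simp add: divide_le_eq)
  qed
  define x where "x t = Xh t + lam *\<^sub>R Xf t" for t
  define u where "u t = 0 + lam * uf t" for t
  show "\<exists>u x. piecewise_continuous_on 0 (1 + \<tau>) u \<and> solves_lti (two_snapshots A A2 1) B 0 (1 + \<tau>) u x \<and>
            x 0 = x0 \<and> (\<forall>j. h \<le> x (1 + \<tau>) $ j)"
  proof (intro exI conjI allI)
    show "solves_lti (two_snapshots A A2 1) B 0 (1 + \<tau>) u x"
      unfolding u_def x_def T_def[symmetric] by (rule sol_add[OF sh sol_scale[OF sf]])
    show "piecewise_continuous_on 0 (1 + \<tau>) u"
      unfolding u_def uf_def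
      by (intro pcw_imp pcw_add pcw_const pcw_scale pcw_sum pcw_diff pcw_H pcw_H' F1(1) F2(1))
    show "x 0 = x0"
      using F1(2) by (auto simp: x_def Xh_def Xf_def X1_def intro!: sum.neutral)
    fix j
    have "x (1 + \<tau>) $ j = H $ j + lam * y $ j"
      using XfT by (simp add: x_def H_def T_def)
    then show "h \<le> x (1 + \<tau>) $ j" using lam_ge[of j] by linarith
  qed
qed

theorem mainTheorem4:
  fixes S :: "'n::finite \<Rightarrow> 'n \<Rightarrow> sign" and l :: 'n and b1 :: real
  assumes b1_pos: "b1 > 0"
    and leader_no_in: "\<forall>k. k \<noteq> l \<longrightarrow> S l k = Zero"
    and reach: "\<forall>j. (edge S)\<^sup>*\<^sup>* l j"
  shows "\<exists>A1 A2 t0 t1 t2. has_sign_pattern S A1 \<and> has_sign_pattern S A2 \<and> t0 < t1 \<and> t1 < t2 \<and>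
           completely_herdable (two_snapshots A1 A2 t1)
             (\<chi> j. if j = l then b1 else 0) t0 t2"
proof -
  have b1ne: "b1 \<noteq> 0" using b1_pos by simp
  obtain e where e: "e > 0" and nz: "\<forall>j. iterM (Aeps S l e) (dep S l j) (Bv l b1) $ j \<noteq> 0"
    using exists_eps[OF reach b1ne] by blast
  define A where "A = Aeps S l e"
  define B where "B = Bv l b1"
  obtain v where gv: "good A B v" and vnz: "\<forall>j. v $ j \<noteq> 0"
    using exists_nz_vec_all[OF nz] unfolding A_def B_def by blast
  define A2 where "A2 = A2of A v"
  define w where "w = Dv v"
  have gw: "good A2 B w" unfolding A2_def w_def B_def by (rule good_Dv) (use gv B_def in simp)
  have "\<forall>\<^sub>F \<tau> in at_right 0. (Phi A2 B \<tau> (- v) + w) $ j > 0" for j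
  proof -
    have "((\<lambda>\<tau>. (Phi A2 B \<tau> (- v) + w) $ j) \<longlongrightarrow> (- v + w) $ j) (at_right 0)"
      by (intro tendsto_vec_nth tendsto_add Phi_tendsto tendsto_const)
    moreover have "(- v + w) $ j > 0" using Dv_pos[of v j] vnz w_def by simp
    ultimately show ?thesis by (rule order_tendstoD(1))
  qed
  then have ev1: "\<forall>\<^sub>F \<tau> in at_right 0. \<forall>j. (Phi A2 B \<tau> (- v) + w) $ j > 0"
    by (rule eventually_all_finite)
  have ev2: "\<forall>\<^sub>F \<tau> in at_right (0::real). \<tau> < 1"
    using order_tendstoD(2)[OF tendsto_ident_at[of "0::real" "{0<..}"], of "1::real"] by simp
  have "\<forall>\<^sub>F \<tau> in at_right (0::real). 0 < \<tau> \<and> \<tau> < 1 \<and> (\<forall>j. (Phi A2 B \<tau> (- v) + w) $ j > 0)"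
    using ev1 ev2 ev_right[of 0] by eventually_elim auto
  then obtain \<tau> where tau: "0 < \<tau>" "\<tau> < 1" and ypos: "\<forall>j. (Phi A2 B \<tau> (- v) + w) $ j > 0"
    using eventually_happens trivial_limit_at_right_real by blast
  have herd: "completely_herdable (two_snapshots A A2 1) B 0 (1 + \<tau>)"
    by (rule herd_core[OF tau(1) _ good_neg[OF gv] gw ypos]) (use tau in simp)
  have pA: "has_sign_pattern S A" unfolding A_def by (rule Aeps_pattern[OF e])
  have pA2: "has_sign_pattern S A2" unfolding A2_def by (rule A2_pattern[OF pA])
  show ?thesis
    using pA pA2 herd tau unfolding B_def Bv_def
    by (intro exI[of _ A] exI[of _ A2] exI[of _ 0] exI[of _ 1] exI[of _ "1 + \<tau>"]) auto
qed

end
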